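(* Suppose Assumption V holds. For $x\in\mathcal V$, let $v_x$ and $r_x$ be as in Assumption V and let $h(y)=\langle v_x,y-x\rangle$ on $\overline G$. Then for each $x\in\mathcal V$ there exist constants $c>0$ and $C>0$ such that for all sufficiently small $\varepsilon>0$ and all $\delta\in(0,\varepsilon)$ there exists a nonnegative function $g_{\delta,\varepsilon}\in\mathcal C^2_c(\overline G)\oplus\mathbb R$ with $-g_{\delta,\varepsilon}\in\mathcal H$ such that: (1) $\sup_{y\in\overline G}g_{\delta,\varepsilon}(y)\le C\varepsilon$; (2) $\sup_{y\in\overline G}|\nabla g_{\delta,\varepsilon}(y)|\le C\sqrt\varepsilon$; (3) $\sup_{y\in\overline G}|\langle b(y),\nabla g_{\delta,\varepsilon}(y)\rangle|\le C\sqrt\varepsilon$; (4) for each $y\in\overline G\cap B_{r_x}(x)$: (a) $\sum_{i,j=1}^Ja_{ij}(y)\frac{\partial^2g_{\delta,\varepsilon}(y)}{\partial x_i\partial x_j}\ge c$ if $\delta+2\sqrt\delta<h(y)<\varepsilon/2$; (b) $\big|\sum_{i,j=1}^Ja_{ij}(y)\frac{\partial^2g_{\delta,\varepsilon}(y)}{\partial x_i\partial x_j}\big|\le C\sqrt\varepsilon$ if $h(y)\ge\varepsilon$; (c) $\sum_{i,j=1}^Ja_{ij}(y)\frac{\partial^2g_{\delta,\varepsilon}(y)}{\partial x_i\partial x_j}\ge0$ otherwise.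
   Context: $G\subset\mathbb R^J$ is a nonempty connected domain; $d(\cdot)$ is a set-valued map on $\overline G$ with $d(x)$ a nonempty closed convex cone with vertex $0$ for $x\in\partial G$, $d(x)=\{0\}$ in the interior, closed graph; $\mathcal V\subset\partial G$. $b:\mathbb R^J\to\mathbb R^J$, $\sigma:\mathbb R^J\to\mathbb R^{J\times N}$ continuous, $a=\sigma\sigma^T$. $B_r(x)=\{y:|y-x|\le r\}$. $\mathcal C^2_c(\overline G)$: restrictions to $\overline G$ of functions $\mathcal C^2$ on every open neighbourhood of $\overline G$, with compact support; $\mathcal C^2_c(\overline G)\oplus\mathbb R$: sums of such a function and a constant. $\mathcal H=\{f\in\mathcal C^2_c(\overline G)\oplus\mathbb R:f$ constant on an open neighbourhood of each point of $\mathcal V$, $\langle d,\nabla f(y)\rangle\le0$ for all $d\in d(y)$, $y\in\partial G\}$. Assumption V: $\mathcal V$ is finite and for each $x\in\mathcal V$ there exist a unit vector $v_x$ and constants $\alpha_x,r_x>0$ such that $\langle v_x,y-x\rangle\ge\alpha_x|y-x|$, $v_x^Ta(y)v_x\ge\alpha_x$ and $\langle v_x,d\rangle\ge0$ for all $d\in d(y)$ and all $y\in\overline G\cap B_{r_x}(x)$. *)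

theory Defs
  imports "HOL-Analysis.Analysis"
begin

text \<open>Points of R^J are vectors of type real^'j (J = CARD('j)).\<close>

definition pd :: "'j::finite \<Rightarrow> (real^'j \<Rightarrow> real) \<Rightarrow> real^'j \<Rightarrow> real" where
  "pd i f y = frechet_derivative f (at y) (axis i 1)"

definition grad :: "(real^'j::finite \<Rightarrow> real) \<Rightarrow> real^'j \<Rightarrow> real^'j" where
  "grad f y = (\<chi> i. pd i f y)"

definition pd2 :: "'j::finite \<Rightarrow> 'j \<Rightarrow> (real^'j \<Rightarrow> real) \<Rightarrow> real^'j \<Rightarrow> real" where
  "pd2 i j f y = pd i (pd j f) y"

definition C2_on :: "(real^'j::finite) set \<Rightarrow> (real^'j \<Rightarrow> real) \<Rightarrow> bool" where
  "C2_on U f \<longleftrightarrow> (\<forall>y\<in>U. f differentiable (at y))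
     \<and> (\<forall>j. \<forall>y\<in>U. (pd j f) differentiable (at y))
     \<and> (\<forall>i j. continuous_on U (pd2 i j f))"

text \<open>Membership of (the restriction to closure G of) f in C^2_c(closure G) \<oplus> R:
  f is C^2 on an open neighbourhood of closure G and f minus some constant has
  compact support in closure G.\<close>
definition C2c_plus_R :: "(real^'j::finite) set \<Rightarrow> (real^'j \<Rightarrow> real) \<Rightarrow> bool" where
  "C2c_plus_R G f \<longleftrightarrow> (\<exists>U k. open U \<and> closure G \<subseteq> U \<and> C2_on U f
       \<and> compact (closure {y \<in> closure G. f y \<noteq> k}))"

definition testH :: "(real^'j::finite) set \<Rightarrow> (real^'j \<Rightarrow> (real^'j) set) \<Rightarrow> (real^'j) set
      \<Rightarrow> (real^'j \<Rightarrow> real) \<Rightarrow> bool" where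
  "testH G d V f \<longleftrightarrow> C2c_plus_R G f
     \<and> (\<forall>x\<in>V. \<exists>U. open U \<and> x \<in> U \<and> (\<forall>y\<in>U \<inter> closure G. f y = f x))
     \<and> (\<forall>y\<in>frontier G. \<forall>e\<in>d y. e \<bullet> grad f y \<le> 0)"

definition diffm :: "(real^'j::finite \<Rightarrow> real^'n::finite^'j) \<Rightarrow> real^'j \<Rightarrow> real^'j^'j" where
  "diffm sg y = sg y ** transpose (sg y)"

definition assmV_at :: "(real^'j::finite) set \<Rightarrow> (real^'j \<Rightarrow> (real^'j) set) \<Rightarrow> (real^'j \<Rightarrow> real^'n::finite^'j)
      \<Rightarrow> real^'j \<Rightarrow> real^'j \<Rightarrow> real \<Rightarrow> real \<Rightarrow> bool" where
  "assmV_at G d sg x v \<alpha> r \<longleftrightarrow> norm v = 1 \<and> \<alpha> > 0 \<and> r > 0 \<and>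
     (\<forall>y\<in>closure G \<inter> cball x r.
        v \<bullet> (y - x) \<ge> \<alpha> * norm (y - x)
      \<and> v \<bullet> (diffm sg y *v v) \<ge> \<alpha>
      \<and> (\<forall>e\<in>d y. v \<bullet> e \<ge> 0))"

definition assmV :: "(real^'j::finite) set \<Rightarrow> (real^'j \<Rightarrow> (real^'j) set) \<Rightarrow> (real^'j \<Rightarrow> real^'n::finite^'j)
      \<Rightarrow> (real^'j) set \<Rightarrow> bool" where
  "assmV G d sg V \<longleftrightarrow> finite V \<and> (\<forall>x\<in>V. \<exists>v \<alpha> r. assmV_at G d sg x v \<alpha> r)"

end

theory Submission
  imports Defs
begin

definition rr1 :: "real \<Rightarrow> real" where "rr1 s = max 0 s"
definition rr2 :: "real \<Rightarrow> real" where "rr2 s = (max 0 s)^2/2"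
definition rr3 :: "real \<Rightarrow> real" where "rr3 s = (max 0 s)^3/6"

lemma rr2_deriv: "(rr2 has_real_derivative rr1 s) (at s)"
proof (cases "s = 0")
  case True
  have "((\<lambda>y. (rr2 y - rr2 0) / (y - 0)) \<longlongrightarrow> rr1 0) (at 0)"
  proof (rule Lim_transform_within[where f="\<lambda>y. max 0 y / 2"])
    show "((\<lambda>y. max 0 y / 2) \<longlongrightarrow> rr1 0) (at 0)"
    proof -
      have "isCont (\<lambda>y::real. max 0 y / 2) 0" by (auto intro!: continuous_intros)
      then show ?thesis by (simp add: isCont_def rr1_def)
    qed
    show "0 < (1::real)" by simp
    fix y :: real assume "0 < dist y 0" "dist y 0 < 1"
    then have "y \<noteq> 0" by auto
    then show "max 0 y / 2 = (rr2 y - rr2 0) / (y - 0)"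
      by (cases "y > 0") (auto simp: rr2_def power2_eq_square max_def)
  qed
  then show ?thesis using True by (simp add: has_field_derivative_iff)
next
  case False
  show ?thesis
  proof (cases "s > 0")
    case True
    have d: "((\<lambda>y. y^2/2) has_real_derivative rr1 s) (at s)"
      using True by (auto intro!: derivative_eq_intros simp: rr1_def rr2_def power2_eq_square)
    show ?thesis
      apply (rule has_field_derivative_transform_within_open[OF d, of "{0<..}"])
      using True by (auto simp: rr2_def rr1_def)
  next
    case False
    with \<open>s \<noteq> 0\<close> have "s < 0" by auto
    have d: "((\<lambda>y. 0) has_real_derivative rr1 s) (at s)"
      using \<open>s<0\<close> by (auto intro!: derivative_eq_intros simp: rr1_def)
    show ?thesis
      apply (rule has_field_derivative_transform_within_open[OF d, of "{..<0}"])
      using \<open>s<0\<close> by (auto simp: rr2_def rr1_def)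
  qed
qed

lemma rr3_deriv: "(rr3 has_real_derivative rr2 s) (at s)"
proof (cases "s = 0")
  case True
  have "((\<lambda>y. (rr3 y - rr3 0) / (y - 0)) \<longlongrightarrow> rr2 0) (at 0)"
  proof (rule Lim_transform_within[where f="\<lambda>y. (max 0 y)^2 / 6"])
    show "((\<lambda>y. (max 0 y)^2 / 6) \<longlongrightarrow> rr2 0) (at 0)"
    proof -
      have "isCont (\<lambda>y::real. (max 0 y)^2 / 6) 0" by (auto intro!: continuous_intros)
      then show ?thesis by (simp add: isCont_def rr2_def)
    qed
    show "0 < (1::real)" by simp
    fix y :: real assume "0 < dist y 0" "dist y 0 < 1"
    then have "y \<noteq> 0" by auto
    then show "(max 0 y)^2 / 6 = (rr3 y - rr3 0) / (y - 0)"
      by (cases "y > 0") (auto simp: rr3_def power2_eq_square power3_eq_cube max_def)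
  qed
  then show ?thesis using True by (simp add: has_field_derivative_iff)
next
  case False
  show ?thesis
  proof (cases "s > 0")
    case True
    have d: "((\<lambda>y. y^3/6) has_real_derivative rr2 s) (at s)"
      using True by (auto intro!: derivative_eq_intros simp: rr1_def rr2_def power2_eq_square)
    show ?thesis
      apply (rule has_field_derivative_transform_within_open[OF d, of "{0<..}"])
      using True by (auto simp: rr3_def rr2_def)
  next
    case False
    with \<open>s \<noteq> 0\<close> have "s < 0" by auto
    have d: "((\<lambda>y. 0) has_real_derivative rr2 s) (at s)"
      using \<open>s<0\<close> by (auto intro!: derivative_eq_intros simp: rr2_def)
    show ?thesis
      apply (rule has_field_derivative_transform_within_open[OF d, of "{..<0}"])
      using \<open>s<0\<close> by (auto simp: rr3_def rr2_def)
  qed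
qed

lemma rr2_chain[derivative_intros]:
  "(g has_real_derivative g') (at s) \<Longrightarrow> ((\<lambda>s. rr2 (g s)) has_real_derivative rr1 (g s) * g') (at s)"
  using DERIV_chain2[OF rr2_deriv] by blast
lemma rr3_chain[derivative_intros]:
  "(g has_real_derivative g') (at s) \<Longrightarrow> ((\<lambda>s. rr3 (g s)) has_real_derivative rr2 (g s) * g') (at s)"
  using DERIV_chain2[OF rr3_deriv] by blast
lemma rr1_cont[continuous_intros]: "continuous_on S g \<Longrightarrow> continuous_on S (\<lambda>s. rr1 (g s))"
  unfolding rr1_def by (auto intro!: continuous_intros)

definition qq :: "real\<Rightarrow>real\<Rightarrow>real\<Rightarrow>real\<Rightarrow>real\<Rightarrow>real" where
  "qq a b c d s = (rr1(s-a) - rr1(s-b))/(b-a) - (rr1(s-c) - rr1(s-d))/(d-c)"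
definition QQ :: "real\<Rightarrow>real\<Rightarrow>real\<Rightarrow>real\<Rightarrow>real\<Rightarrow>real" where
  "QQ a b c d s = (rr2(s-a) - rr2(s-b))/(b-a) - (rr2(s-c) - rr2(s-d))/(d-c)"
definition PP :: "real\<Rightarrow>real\<Rightarrow>real\<Rightarrow>real\<Rightarrow>real\<Rightarrow>real" where
  "PP a b c d s = (rr3(s-a) - rr3(s-b))/(b-a) - (rr3(s-c) - rr3(s-d))/(d-c)"

definition "ff a b c d l s = PP a b c d s - PP a b c d (l*(s-d))/l"
definition "FF a b c d l s = QQ a b c d s - QQ a b c d (l*(s-d))"
definition "pp a b c d l s = qq a b c d s - l * qq a b c d (l*(s-d))"

context fixes a b c d :: real assumes abcd: "0<a" "a<b" "b<c" "c<d"
begin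

lemma PP_deriv: "(PP a b c d has_real_derivative QQ a b c d s) (at s)"
  unfolding PP_def QQ_def
  using abcd by (auto intro!: derivative_eq_intros)
lemma QQ_deriv: "(QQ a b c d has_real_derivative qq a b c d s) (at s)"
  unfolding qq_def QQ_def
  using abcd by (auto intro!: derivative_eq_intros)
lemma qq_cont: "continuous_on UNIV (qq a b c d)"
  unfolding qq_def using abcd by (auto intro!: continuous_intros)

lemma ff_deriv: assumes "l > 0" shows "(ff a b c d l has_real_derivative FF a b c d l s) (at s)"
  unfolding ff_def FF_def
  using assms by (auto intro!: derivative_eq_intros PP_deriv[THEN DERIV_chain2] PP_deriv)
lemma FF_deriv: "(FF a b c d l has_real_derivative pp a b c d l s) (at s)"
  unfolding pp_def FF_def
  using abcd by (auto intro!: derivative_eq_intros QQ_deriv[THEN DERIV_chain2] QQ_deriv)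
lemma pp_cont: "continuous_on UNIV (pp a b c d l)"
proof -
  have "continuous_on UNIV (\<lambda>s. qq a b c d (l*(s-d)))"
    by (rule continuous_on_compose2[OF qq_cont]) (auto intro!: continuous_intros)
  then show ?thesis unfolding pp_def by (auto intro!: continuous_intros qq_cont)
qed

lemma qq_eq: "qq a b c d s = (if s \<le> a then 0 else if s \<le> b then (s-a)/(b-a) else if s \<le> c then 1
   else if s \<le> d then (d-s)/(d-c) else 0)"
proof -
  have "b - a \<noteq> 0" "d - c \<noteq> 0" using abcd by auto
  then show ?thesis using abcd unfolding qq_def rr1_def
    by (auto simp: max_def divide_simps) (auto simp: algebra_simps)
qed

lemma qq_nonneg: "qq a b c d s \<ge> 0"
  using abcd by (auto simp: qq_eq)
lemma qq_le1: "qq a b c d s \<le> 1"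
  using abcd by (auto simp: qq_eq)
lemma qq_one: "b \<le> s \<Longrightarrow> s \<le> c \<Longrightarrow> qq a b c d s = 1"
  using abcd by (auto simp: qq_eq)
lemma qq_zero: "s \<le> a \<or> s \<ge> d \<Longrightarrow> qq a b c d s = 0"
  using abcd by (auto simp: qq_eq)

lemma QQ_low: "s \<le> a \<Longrightarrow> QQ a b c d s = 0"
  using abcd by (auto simp: QQ_def rr2_def max_def)
lemma QQ_high: "s \<ge> d \<Longrightarrow> QQ a b c d s = (c+d-a-b)/2"
proof -
  assume s: "s \<ge> d"
  have "b - a \<noteq> 0" "d - c \<noteq> 0" using abcd by auto
  then show ?thesis using abcd s unfolding QQ_def rr2_def
    by (auto simp: max_def divide_simps power2_eq_square) (auto simp: algebra_simps)
qed
lemma QQ_mono: "s \<le> t \<Longrightarrow> QQ a b c d s \<le> QQ a b c d t"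
  by (rule DERIV_nonneg_imp_nondecreasing) (auto intro!: QQ_deriv qq_nonneg)
lemma QQ_nonneg: "QQ a b c d s \<ge> 0"
proof (cases "s \<le> a")
  case True then show ?thesis by (simp add: QQ_low)
next
  case False then show ?thesis using QQ_mono[of a s] QQ_low[of a] by auto
qed
lemma QQ_le: "QQ a b c d s \<le> (c+d-a-b)/2"
  using QQ_mono[of s "max s d"] QQ_high[of "max s d"] by auto
lemma Qt_le: "(c+d-a-b)/2 \<le> d" using abcd by auto

end

context fixes a b c d l :: real assumes abcd: "0<a" "a<b" "b<c" "c<d" and l: "l > 0"
begin

lemma FF_nonneg: "FF a b c d l s \<ge> 0"
proof (cases "s \<le> d")
  case True
  then have "l*(s-d) \<le> 0" using l by (simp add: mult_nonneg_nonpos)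
  then have "QQ a b c d (l*(s-d)) = 0" using abcd by (intro QQ_low) auto
  then show ?thesis using QQ_nonneg[OF abcd] by (simp add: FF_def)
next
  case False
  then show ?thesis using QQ_high[OF abcd, of s] QQ_le[OF abcd, of "l*(s-d)"] by (simp add: FF_def)
qed
lemma FF_le: "FF a b c d l s \<le> d"
  using QQ_le[OF abcd, of s] QQ_nonneg[OF abcd, of "l*(s-d)"] Qt_le[OF abcd] by (simp add: FF_def)
lemma FF_high: "s \<ge> d + d/l \<Longrightarrow> FF a b c d l s = 0"
proof -
  assume s: "s \<ge> d + d/l"
  then have "l*(s-d) \<ge> l*(d/l)" using l by (intro mult_left_mono) auto
  then have "l*(s-d) \<ge> d" using l by simp
  moreover have "s \<ge> d" using s l abcd by (smt (verit) divide_pos_pos)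
  ultimately show ?thesis by (simp add: FF_def QQ_high[OF abcd])
qed
lemma pp_mid: "b \<le> s \<Longrightarrow> s \<le> c \<Longrightarrow> pp a b c d l s = 1"
proof -
  assume s: "b \<le> s" "s \<le> c"
  then have "l*(s-d) \<le> 0" using l abcd by (simp add: mult_nonneg_nonpos)
  then show ?thesis using s abcd by (simp add: pp_def qq_one[OF abcd] qq_zero[OF abcd])
qed
lemma pp_low: "s < d \<Longrightarrow> pp a b c d l s = qq a b c d s"
proof -
  assume s: "s < d"
  then have "l*(s-d) \<le> 0" using l abcd by (simp add: mult_nonneg_nonpos)
  then show ?thesis using s abcd by (simp add: pp_def qq_zero[OF abcd])
qed
lemma pp_high: "s \<ge> d \<Longrightarrow> \<bar>pp a b c d l s\<bar> \<le> l"
  using qq_zero[OF abcd, of s] qq_nonneg[OF abcd, of "l*(s-d)"] qq_le1[OF abcd, of "l*(s-d)"] l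
  by (simp add: pp_def mult_le_cancel_left1)

lemma ff_low: "s \<le> a \<Longrightarrow> ff a b c d l s = 0"
proof -
  assume s: "s \<le> a"
  then have "l*(s-d) \<le> 0" using l abcd by (simp add: mult_nonneg_nonpos)
  then show ?thesis using s abcd by (simp add: ff_def PP_def rr3_def max_def)
qed
lemma ff_mono: "s \<le> t \<Longrightarrow> ff a b c d l s \<le> ff a b c d l t"
  by (rule DERIV_nonneg_imp_nondecreasing) (auto intro!: ff_deriv[OF abcd l] FF_nonneg)
lemma ff_nonneg: "ff a b c d l s \<ge> 0"
  using ff_low[of s] ff_mono[of a s] ff_low[of a]
  by (cases "s \<le> a") auto
lemma ff_const: assumes "s \<ge> d + d/l" shows "ff a b c d l s = ff a b c d l (d + d/l)"
proof -
  have "(\<lambda>t. - ff a b c d l t) (d+d/l) \<le> (\<lambda>t. - ff a b c d l t) s"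
    by (rule DERIV_nonneg_imp_nondecreasing[OF assms])
       (auto intro!: derivative_eq_intros ff_deriv[OF abcd l] simp: FF_high)
  then show ?thesis using ff_mono[OF assms] by simp
qed
lemma ff_le_lin: assumes "s \<ge> 0" shows "ff a b c d l s \<le> d * s"
proof -
  have "(\<lambda>t. d*t - ff a b c d l t) 0 \<le> (\<lambda>t. d*t - ff a b c d l t) s"
    by (rule DERIV_nonneg_imp_nondecreasing[OF assms])
       (auto intro!: derivative_eq_intros ff_deriv[OF abcd l] simp: FF_le)
  then show ?thesis using ff_low[of 0] abcd by simp
qed
lemma ff_le: "ff a b c d l s \<le> d * (d + d/l)"
proof -
  have T: "d + d/l \<ge> 0" using abcd l by simp
  show ?thesis
  proof (cases "s \<le> d + d/l")
    case True then show ?thesis using ff_mono[OF True] ff_le_lin[OF T] by simp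
  next
    case False then show ?thesis using ff_const[of s] ff_le_lin[OF T] by simp
  qed
qed

end


lemma pd_of_deriv: "(\<phi> has_derivative D) (at y) \<Longrightarrow> pd j \<phi> y = D (axis j 1)"
  unfolding pd_def using frechet_derivative_at by metis

lemma comp_deriv:
  fixes v x :: "real^'j::finite"
  assumes "(f has_real_derivative f1) (at (v \<bullet> (y - x)))"
  shows "((\<lambda>y. f (v \<bullet> (y - x))) has_derivative (\<lambda>z. f1 * (v \<bullet> z))) (at y)"
proof -
  have h: "((\<lambda>y. v \<bullet> (y - x)) has_derivative (\<lambda>z. v \<bullet> z)) (at y)"
    by (auto intro!: derivative_eq_intros)
  have "((\<lambda>y. f (v \<bullet> (y - x))) has_derivative (\<lambda>z. (*) f1 (v \<bullet> z))) (at y)"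
    by (rule has_derivative_compose[OF h]) (use assms has_field_derivative_imp_has_derivative in blast)
  then show ?thesis by simp
qed

lemma local_C2:
  fixes g :: "real^'j::finite \<Rightarrow> real" and v x :: "real^'j"
  assumes W: "open W1" "open W2"
    and f: "\<And>s. (f has_real_derivative f1 s) (at s)" "\<And>s. (f1 has_real_derivative f2 s) (at s)"
    and f2c: "continuous_on UNIV f2"
    and g1': "\<forall>y\<in>W1. g y = f (v \<bullet> (y - x))"
    and g2': "\<forall>y\<in>W2. g y = k"
  shows "C2_on (W1\<union>W2) g"
    and "\<And>y j. y\<in>W1 \<Longrightarrow> pd j g y = f1 (v \<bullet> (y - x)) * v$j"
    and "\<And>y i j. y\<in>W1 \<Longrightarrow> pd2 i j g y = f2 (v \<bullet> (y - x)) * v$i * v$j"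
    and "\<And>y j. y\<in>W2 \<Longrightarrow> pd j g y = 0"
    and "\<And>y i j. y\<in>W2 \<Longrightarrow> pd2 i j g y = 0"
proof -
  have g1: "\<And>y. y\<in>W1 \<Longrightarrow> g y = f (v \<bullet> (y - x))" using g1' by blast
  have g2: "\<And>y. y\<in>W2 \<Longrightarrow> g y = k" using g2' by blast
  have D1: "(g has_derivative (\<lambda>z. f1 (v \<bullet> (y - x)) * (v \<bullet> z))) (at y)" if "y \<in> W1" for y
    by (rule has_derivative_transform_within_open[OF comp_deriv[OF f(1)] W(1) that]) (simp add: g1)
  have D2: "(g has_derivative (\<lambda>z. 0)) (at y)" if "y \<in> W2" for y
    by (rule has_derivative_transform_within_open[of "\<lambda>_. k", OF _ W(2) that])
       (auto simp: g2)
  show P1: "pd j g y = f1 (v \<bullet> (y - x)) * v$j" if "y\<in>W1" for y j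
    using pd_of_deriv[OF D1[OF that]] by (simp add: inner_axis)
  show P2: "pd j g y = 0" if "y\<in>W2" for y j
    using pd_of_deriv[OF D2[OF that]] by simp
  have E1: "(pd j g has_derivative (\<lambda>z. f2 (v \<bullet> (y - x)) * (v \<bullet> z) * v$j)) (at y)" if "y \<in> W1" for y j
  proof -
    have "((\<lambda>y. f1 (v \<bullet> (y - x)) * v$j) has_derivative (\<lambda>z. f2 (v \<bullet> (y - x)) * (v \<bullet> z) * v$j)) (at y)"
      by (rule has_derivative_mult_left[OF comp_deriv[OF f(2)]])
    then show ?thesis
      by (rule has_derivative_transform_within_open[OF _ W(1) that]) (simp add: P1)
  qed
  have E2: "(pd j g has_derivative (\<lambda>z. 0)) (at y)" if "y \<in> W2" for y j
    by (rule has_derivative_transform_within_open[of "\<lambda>_. 0", OF _ W(2) that])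
       (auto simp: P2)
  show Q1: "pd2 i j g y = f2 (v \<bullet> (y - x)) * v$i * v$j" if "y\<in>W1" for y i j
    using pd_of_deriv[OF E1[OF that]] by (simp add: inner_axis pd2_def)
  show Q2: "pd2 i j g y = 0" if "y\<in>W2" for y i j
    using pd_of_deriv[OF E2[OF that]] by (simp add: pd2_def)
  show "C2_on (W1\<union>W2) g"
    unfolding C2_on_def
  proof (intro conjI ballI allI)
    fix y assume "y \<in> W1 \<union> W2"
    then show "g differentiable at y" using D1 D2 unfolding differentiable_def by blast
  next
    fix j y assume "y \<in> W1 \<union> W2"
    then show "pd j g differentiable at y" using E1 E2 unfolding differentiable_def by blast
  next
    fix i j
    have c1: "continuous_on W1 (\<lambda>y. f2 (v \<bullet> (y - x)) * v$i * v$j)"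
      by (intro continuous_intros continuous_on_compose2[OF f2c]) auto
    show "continuous_on (W1 \<union> W2) (pd2 i j g)"
    proof (rule continuous_on_open_Un[OF W])
      show "continuous_on W1 (pd2 i j g)" using c1 by (rule continuous_on_cong[THEN iffD1, rotated 2]) (auto simp: Q1)
      show "continuous_on W2 (pd2 i j g)"
        by (rule continuous_on_cong[THEN iffD1, of _ _ "\<lambda>_. 0", rotated 2]) (auto simp: Q2)
    qed
  qed
qed


lemma diffm_quad_cont:
  fixes sg :: "real^'j::finite \<Rightarrow> real^'n::finite^'j"
  assumes "continuous_on UNIV sg"
  shows "continuous_on S (\<lambda>y. v \<bullet> (diffm sg y *v v))"
proof -
  have c: "continuous_on S (\<lambda>y. sg y $ i $ k)" for i k
    by (intro continuous_on_component continuous_on_subset[OF assms]) auto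
  show ?thesis
    unfolding diffm_def matrix_matrix_mult_def matrix_vector_mult_def transpose_def inner_vec_def
    by (simp, intro continuous_intros c)
qed

lemma quad_sum:
  fixes A :: "real^'j::finite^'j"
  shows "(\<Sum>i\<in>UNIV. \<Sum>j\<in>UNIV. A $ i $ j * (p * v$i * v$j)) = p * (v \<bullet> (A *v v))"
  unfolding matrix_vector_mult_def inner_vec_def
  by (simp add: sum_distrib_left mult_ac)

theorem lemma5p13:
  fixes G :: "(real^'j) set"
    and d :: "real^'j \<Rightarrow> (real^'j) set"
    and V :: "(real^'j) set"
    and b :: "real^'j \<Rightarrow> real^'j"
    and sg :: "real^'j \<Rightarrow> real^'n^'j"
  assumes G_open: "open G" and G_conn: "connected G" and G_ne: "G \<noteq> {}"
    and d_bdry: "\<forall>x\<in>frontier G. closed (d x) \<and> convex_cone (d x)"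
    and d_int: "\<forall>x\<in>G. d x = {0}"
    and d_graph: "closed {(x, e). x \<in> closure G \<and> e \<in> d x}"
    and V_sub: "V \<subseteq> frontier G"
    and b_cont: "continuous_on UNIV b"
    and sigma_cont: "continuous_on UNIV sg"
    and AV: "assmV G d sg V"
  shows "\<forall>x\<in>V. \<forall>v \<alpha> r. assmV_at G d sg x v \<alpha> r \<longrightarrow>
     (\<exists>c>0. \<exists>C>0. \<exists>\<epsilon>0>0. \<forall>\<epsilon>. 0 < \<epsilon> \<and> \<epsilon> < \<epsilon>0 \<longrightarrow> (\<forall>\<delta>. 0 < \<delta> \<and> \<delta> < \<epsilon> \<longrightarrow>
       (\<exists>g :: real^'j \<Rightarrow> real.
          C2c_plus_R G g \<and> testH G d V (\<lambda>y. - g y)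
        \<and> (\<forall>y\<in>closure G. g y \<ge> 0)
        \<and> (\<forall>y\<in>closure G. g y \<le> C * \<epsilon>)
        \<and> (\<forall>y\<in>closure G. norm (grad g y) \<le> C * sqrt \<epsilon>)
        \<and> (\<forall>y\<in>closure G. \<bar>b y \<bullet> grad g y\<bar> \<le> C * sqrt \<epsilon>)
        \<and> (\<forall>y\<in>closure G \<inter> cball x r.
             let h = v \<bullet> (y - x);
                 L = (\<Sum>i\<in>UNIV. \<Sum>j\<in>UNIV. diffm sg y $ i $ j * pd2 i j g y)
             in (\<delta> + 2 * sqrt \<delta> < h \<and> h < \<epsilon> / 2 \<longrightarrow> L \<ge> c)
              \<and> (h \<ge> \<epsilon> \<longrightarrow> \<bar>L\<bar> \<le> C * sqrt \<epsilon>)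
              \<and> (\<not> (\<delta> + 2 * sqrt \<delta> < h \<and> h < \<epsilon> / 2) \<and> \<not> (h \<ge> \<epsilon>) \<longrightarrow> L \<ge> 0)))))"
proof (intro ballI allI impI)
  fix x v \<alpha> r assume xV: "x \<in> V" and AX: "assmV_at G d sg x v \<alpha> r"
  have nv: "norm v = 1" and \<alpha>: "\<alpha> > 0" and r: "r > 0"
    and KF: "\<And>y. y \<in> closure G \<Longrightarrow> y \<in> cball x r \<Longrightarrow> v \<bullet> (y - x) \<ge> \<alpha> * norm (y - x)
        \<and> v \<bullet> (diffm sg y *v v) \<ge> \<alpha> \<and> (\<forall>e\<in>d y. v \<bullet> e \<ge> 0)"
    using AX unfolding assmV_at_def by auto
  have finV: "finite V" using AV by (simp add: assmV_def)
  have "compact (b ` cball x r)"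
    by (intro compact_continuous_image continuous_on_subset[OF b_cont]) auto
  then have "bounded (b ` cball x r)" by (rule compact_imp_bounded)
  then obtain B where B0: "B > 0" "\<forall>z\<in>b ` cball x r. norm z \<le> B" by (auto simp: bounded_pos)
  then have B: "B > 0" "\<And>y. y \<in> cball x r \<Longrightarrow> norm (b y) \<le> B" by auto
  have "compact ((\<lambda>y. v \<bullet> (diffm sg y *v v)) ` cball x r)"
    by (intro compact_continuous_image diffm_quad_cont[OF sigma_cont]) auto
  then have "bounded ((\<lambda>y. v \<bullet> (diffm sg y *v v)) ` cball x r)" by (rule compact_imp_bounded)
  then obtain M where M0: "M > 0" "\<forall>z\<in>(\<lambda>y. v \<bullet> (diffm sg y *v v)) ` cball x r. norm z \<le> M" by (auto simp: bounded_pos)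
  then have M: "M > 0" "\<And>y. y \<in> cball x r \<Longrightarrow> norm (v \<bullet> (diffm sg y *v v)) \<le> M" by auto
  define \<rho> where "\<rho> = Min (insert (r/2) ((\<lambda>z. dist z x) ` (V - {x})))"
  have \<rho>pos: "\<rho> > 0" unfolding \<rho>_def using finV r by auto
  have \<rho>r: "\<rho> \<le> r/2" unfolding \<rho>_def using finV by (intro Min_le) auto
  have \<rho>V: "\<And>z. z \<in> V \<Longrightarrow> z \<noteq> x \<Longrightarrow> \<rho> \<le> dist z x" unfolding \<rho>_def using finV by (intro Min_le) auto
  define C where "C = 2 + B + M"
  define \<epsilon>0 where "\<epsilon>0 = min 1 ((\<alpha>*\<rho>/2)^2)"
  have Cpos: "C > 0" using B M by (simp add: C_def)
  have e0pos: "\<epsilon>0 > 0" using \<alpha> \<rho>pos by (simp add: \<epsilon>0_def)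
  show "\<exists>c>0. \<exists>C>0. \<exists>\<epsilon>0>0. \<forall>\<epsilon>. 0 < \<epsilon> \<and> \<epsilon> < \<epsilon>0 \<longrightarrow> (\<forall>\<delta>. 0 < \<delta> \<and> \<delta> < \<epsilon> \<longrightarrow>
       (\<exists>g :: real^'j \<Rightarrow> real.
          C2c_plus_R G g \<and> testH G d V (\<lambda>y. - g y)
        \<and> (\<forall>y\<in>closure G. g y \<ge> 0)
        \<and> (\<forall>y\<in>closure G. g y \<le> C * \<epsilon>)
        \<and> (\<forall>y\<in>closure G. norm (grad g y) \<le> C * sqrt \<epsilon>)
        \<and> (\<forall>y\<in>closure G. \<bar>b y \<bullet> grad g y\<bar> \<le> C * sqrt \<epsilon>)
        \<and> (\<forall>y\<in>closure G \<inter> cball x r.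
             let h = v \<bullet> (y - x);
                 L = (\<Sum>i\<in>UNIV. \<Sum>j\<in>UNIV. diffm sg y $ i $ j * pd2 i j g y)
             in (\<delta> + 2 * sqrt \<delta> < h \<and> h < \<epsilon> / 2 \<longrightarrow> L \<ge> c)
              \<and> (h \<ge> \<epsilon> \<longrightarrow> \<bar>L\<bar> \<le> C * sqrt \<epsilon>)
              \<and> (\<not> (\<delta> + 2 * sqrt \<delta> < h \<and> h < \<epsilon> / 2) \<and> \<not> (h \<ge> \<epsilon>) \<longrightarrow> L \<ge> 0))))"
  proof (rule exI[of _ \<alpha>], rule conjI[OF \<alpha>], rule exI[of _ C], rule conjI[OF Cpos], rule exI[of _ \<epsilon>0], rule conjI[OF e0pos], intro allI impI)
    fix \<epsilon> \<delta> :: real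
    assume \<epsilon>: "0 < \<epsilon> \<and> \<epsilon> < \<epsilon>0" and \<delta>: "0 < \<delta> \<and> \<delta> < \<epsilon>"
    define d' where "d' = \<epsilon>"
    define c' where "c' = \<epsilon>/2"
    define b' where "b' = min \<delta> (\<epsilon>/4)"
    define a' where "a' = b'/2"
    define l where "l = sqrt \<epsilon>"
    define T where "T = d' + d'/l"
    define r1 where "r1 = 3*r/4"
    have abcd: "0<a'" "a'<b'" "b'<c'" "c'<d'"
      using \<epsilon> \<delta> by (auto simp: a'_def b'_def c'_def d'_def)
    have l: "l > 0" using \<epsilon> by (simp add: l_def)
    have e1: "\<epsilon> < 1" using \<epsilon> by (simp add: \<epsilon>0_def)
    have l1: "l \<le> 1" using e1 by (simp add: l_def)
    have sl: "\<epsilon> \<le> l"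
    proof -
      have "\<epsilon> = l * l" using \<epsilon> by (simp add: l_def)
      also have "\<dots> \<le> l" using l1 l by (intro mult_left_le) auto
      finally show ?thesis .
    qed
    have lsq: "sqrt \<epsilon> < \<alpha>*\<rho>/2"
    proof -
      have "\<epsilon> < (\<alpha>*\<rho>/2)^2" using \<epsilon> by (simp add: \<epsilon>0_def)
      then have "sqrt \<epsilon> < sqrt ((\<alpha>*\<rho>/2)^2)" by (simp only: real_sqrt_less_iff)
      moreover have "\<alpha>*\<rho>/2 > 0" using \<alpha> \<rho>pos by simp
      ultimately show ?thesis by (simp only: real_sqrt_abs abs_of_pos)
    qed
    have Tl: "T = \<epsilon> + l" unfolding T_def d'_def l_def
      using \<epsilon> by (simp add: real_div_sqrt)
    have T\<rho>: "T < \<alpha>*\<rho>" using Tl sl lsq l_def by simp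
    have T2: "T \<le> 2" using Tl sl l1 by linarith
    have Te: "\<epsilon> \<le> T" using Tl l by simp
    have \<alpha>r1: "\<alpha>*\<rho> < \<alpha>*r1" using \<alpha> \<rho>r r by (simp add: r1_def)
    have r1r: "r1 < r" using r by (simp add: r1_def)
    define f where "f = ff a' b' c' d' l"
    define F where "F = FF a' b' c' d' l"
    define p where "p = pp a' b' c' d' l"
    define hh where "hh = (\<lambda>y. v \<bullet> (y - x))"
    define K where "K = f T"
    define g where "g = (\<lambda>y. if dist x y < r1 then f (hh y) else K)"
    define W1 where "W1 = ball x r1 \<union> {y. T < hh y}"
    define W2 where "W2 = {y. r1 < dist x y}"
    have fconst: "\<And>s. s \<ge> T \<Longrightarrow> f s = K"
      unfolding f_def K_def T_def using ff_const[OF abcd l] by blast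
    have oW1: "open W1" unfolding W1_def hh_def
      by (intro open_Un open_ball open_Collect_less continuous_intros)
    have oW2: "open W2" unfolding W2_def
      by (intro open_Collect_less continuous_intros)
    have g1: "\<And>y. y \<in> W1 \<Longrightarrow> g y = f (v \<bullet> (y - x))"
      unfolding W1_def g_def hh_def using fconst by (auto simp: dist_commute)
    have g2: "\<And>y. y \<in> W2 \<Longrightarrow> g y = K"
      unfolding W2_def g_def by auto
    have fd: "\<And>s. (f has_real_derivative F s) (at s)" unfolding f_def F_def using ff_deriv[OF abcd l] .
    have Fd: "\<And>s. (F has_real_derivative p s) (at s)" unfolding F_def p_def using FF_deriv[OF abcd] .
    have pc: "continuous_on UNIV p" unfolding p_def using pp_cont[OF abcd] .
    have g1b: "\<forall>y\<in>W1. g y = f (v \<bullet> (y - x))" using g1 by blast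
    have g2b: "\<forall>y\<in>W2. g y = K" using g2 by blast
    note LC = local_C2[where g=g and k=K and v=v and x=x, OF oW1 oW2 fd Fd pc g1b g2b]
    have mfd: "\<And>s. ((\<lambda>s. - f s) has_real_derivative - F s) (at s)" using fd by (auto intro!: derivative_eq_intros)
    have mFd: "\<And>s. ((\<lambda>s. - F s) has_real_derivative - p s) (at s)" using Fd by (auto intro!: derivative_eq_intros)
    have mpc: "continuous_on UNIV (\<lambda>s. - p s)" using pc by (intro continuous_intros)
    have KFx: "\<And>y. y \<in> closure G \<Longrightarrow> dist x y \<le> r \<Longrightarrow> hh y \<ge> \<alpha> * dist x y"
      using KF unfolding hh_def by (auto simp: dist_norm norm_minus_commute)
    have clW: "closure G \<subseteq> W1 \<union> W2"
    proof
      fix y assume y: "y \<in> closure G"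
      show "y \<in> W1 \<union> W2"
      proof (cases "dist x y = r1")
        case True
        then have "hh y \<ge> \<alpha> * r1" using KFx[OF y] r1r by auto
        then show ?thesis using T\<rho> \<alpha>r1 by (auto simp: W1_def)
      next
        case False then show ?thesis by (cases "dist x y < r1") (auto simp: W1_def W2_def)
      qed
    qed
    have notW1: "\<And>y. y \<in> closure G \<Longrightarrow> y \<notin> W1 \<Longrightarrow> dist x y > r1 \<and> (dist x y \<le> r \<longrightarrow> hh y > T)"
    proof -
      fix y assume y: "y \<in> closure G" "y \<notin> W1"
      then have dr: "dist x y > r1" using clW by (auto simp: W2_def)
      have "dist x y \<le> r \<longrightarrow> hh y > T"
      proof
        assume "dist x y \<le> r"
        then have "hh y \<ge> \<alpha> * dist x y" using KFx[OF y(1)] by blast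
        moreover have "\<alpha> * dist x y \<ge> \<alpha> * r1" using \<alpha> dr by (intro mult_left_mono) auto
        ultimately show "hh y > T" using T\<rho> \<alpha>r1 by linarith
      qed
      then show "dist x y > r1 \<and> (dist x y \<le> r \<longrightarrow> hh y > T)" using dr by blast
    qed
    have mg1: "\<And>y. y \<in> W1 \<Longrightarrow> - g y = (\<lambda>s. - f s) (v \<bullet> (y - x))" using g1 by simp
    have mg2: "\<And>y. y \<in> W2 \<Longrightarrow> - g y = - K" using g2 by simp
    have mg1b: "\<forall>y\<in>W1. - g y = (\<lambda>s. - f s) (v \<bullet> (y - x))" using mg1 by blast
    have mg2b: "\<forall>y\<in>W2. - g y = - K" using mg2 by blast
    note LCm = local_C2[where g="\<lambda>y. - g y" and k="- K" and v=v and x=x, OF oW1 oW2 mfd mFd mpc mg1b mg2b]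
    have gK: "\<And>y. T < hh y \<Longrightarrow> g y = K" unfolding g_def using fconst by auto
    have gne: "\<And>y. g y \<noteq> K \<Longrightarrow> dist x y < r1" unfolding g_def by (auto split: if_splits)
    have fr: "frontier G \<subseteq> closure G" by (auto simp: frontier_def)
    have GR: "\<exists>t. grad g y = t *\<^sub>R v \<and> grad (\<lambda>y. - g y) y = (-t) *\<^sub>R v \<and> 0 \<le> t \<and> t \<le> \<epsilon>
               \<and> (t \<noteq> 0 \<longrightarrow> dist x y < r1)" if y: "y \<in> closure G" for y
    proof (cases "y \<in> W1")
      case True
      show ?thesis
      proof (intro exI[of _ "F (hh y)"] conjI impI)
        show "grad g y = F (hh y) *\<^sub>R v"
          using LC(2)[OF True] by (simp add: grad_def vec_eq_iff hh_def)
        show "grad (\<lambda>y. - g y) y = (- F (hh y)) *\<^sub>R v"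
          using LCm(2)[OF True] by (simp add: grad_def vec_eq_iff hh_def)
        show "0 \<le> F (hh y)" unfolding F_def using FF_nonneg[OF abcd l] .
        show "F (hh y) \<le> \<epsilon>" unfolding F_def using FF_le[OF abcd l] by (simp add: d'_def)
        assume "F (hh y) \<noteq> 0"
        then have "\<not> hh y \<ge> T" unfolding F_def T_def using FF_high[OF abcd l] by blast
        then show "dist x y < r1" using True by (auto simp: W1_def)
      qed
    next
      case False
      then have W2: "y \<in> W2" using clW y by auto
      show ?thesis
        by (intro exI[of _ 0] conjI impI)
           (use LC(4)[OF W2] LCm(4)[OF W2] \<epsilon> in \<open>auto simp: grad_def vec_eq_iff\<close>)
    qed
    have C2: "C2c_plus_R G g"
      unfolding C2c_plus_R_def
    proof (intro exI[of _ "W1 \<union> W2"] exI[of _ K] conjI)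
      show "open (W1 \<union> W2)" using oW1 oW2 by auto
      show "closure G \<subseteq> W1 \<union> W2" by (rule clW)
      show "C2_on (W1 \<union> W2) g" by (rule LC(1))
      have "{y \<in> closure G. g y \<noteq> K} \<subseteq> cball x r1"
      proof
        fix y assume "y \<in> {y \<in> closure G. g y \<noteq> K}"
        then have "dist x y < r1" using gne by blast
        then show "y \<in> cball x r1" by simp
      qed
      then have "bounded {y \<in> closure G. g y \<noteq> K}" using bounded_cball bounded_subset by blast
      then show "compact (closure {y \<in> closure G. g y \<noteq> K})" by simp
    qed
    have C2m: "C2c_plus_R G (\<lambda>y. - g y)"
      unfolding C2c_plus_R_def
    proof (intro exI[of _ "W1 \<union> W2"] exI[of _ "- K"] conjI)
      show "open (W1 \<union> W2)" using oW1 oW2 by auto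
      show "closure G \<subseteq> W1 \<union> W2" by (rule clW)
      show "C2_on (W1 \<union> W2) (\<lambda>y. - g y)" by (rule LCm(1))
      have "{y \<in> closure G. - g y \<noteq> - K} \<subseteq> cball x r1"
      proof
        fix y assume "y \<in> {y \<in> closure G. - g y \<noteq> - K}"
        then have "dist x y < r1" using gne by simp
        then show "y \<in> cball x r1" by simp
      qed
      then have "bounded {y \<in> closure G. - g y \<noteq> - K}" using bounded_cball bounded_subset by blast
      then show "compact (closure {y \<in> closure G. - g y \<noteq> - K})" by simp
    qed
    have vert: "\<exists>U. open U \<and> z \<in> U \<and> (\<forall>y\<in>U \<inter> closure G. - g y = - g z)" if z: "z \<in> V" for z
    proof -
      have zc: "z \<in> closure G" using z V_sub fr by auto
      show ?thesis
      proof (cases "z = x")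
        case True
        have h0: "\<And>y. y \<in> ball x r1 \<Longrightarrow> hh y < a' \<Longrightarrow> g y = 0"
          unfolding g_def f_def using ff_low[OF abcd l] by (auto simp: dist_commute)
        have hx: "hh x = 0" by (simp add: hh_def)
        have "x \<in> ball x r1" using r by (simp add: r1_def)
        then have gx: "g x = 0" using h0 hx abcd by auto
        show ?thesis
        proof (intro exI[of _ "ball x r1 \<inter> {y. hh y < a'}"] conjI ballI)
          show "open (ball x r1 \<inter> {y. hh y < a'})" unfolding hh_def
            by (intro open_Int open_ball open_Collect_less continuous_intros)
          show "z \<in> ball x r1 \<inter> {y. hh y < a'}" using True \<open>x \<in> ball x r1\<close> hx abcd by auto
          fix y assume "y \<in> ball x r1 \<inter> {y. hh y < a'} \<inter> closure G"
          then show "- g y = - g z" using h0 gx True by auto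
        qed
      next
        case False
        show ?thesis
        proof (cases "dist x z \<le> r")
          case True
          have "\<rho> \<le> dist x z" using \<rho>V[OF z False] by (simp add: dist_commute)
          then have "\<alpha> * \<rho> \<le> \<alpha> * dist x z" using \<alpha> by (intro mult_left_mono) auto
          then have hz: "T < hh z" using KFx[OF zc True] T\<rho> by linarith
          show ?thesis
          proof (intro exI[of _ "{y. T < hh y}"] conjI ballI)
            show "open {y. T < hh y}" unfolding hh_def
              by (intro open_Collect_less continuous_intros)
            show "z \<in> {y. T < hh y}" using hz by simp
            fix y assume "y \<in> {y. T < hh y} \<inter> closure G"
            then show "- g y = - g z" using gK hz by auto
          qed
        next
          case False
          then have zW2: "z \<in> W2" using r1r by (auto simp: W2_def)
          show ?thesis
          proof (intro exI[of _ W2] conjI ballI oW2 zW2)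
            fix y assume "y \<in> W2 \<inter> closure G"
            then show "- g y = - g z" using g2 zW2 by auto
          qed
        qed
      qed
    qed
    have bdry: "e \<bullet> grad (\<lambda>y. - g y) y \<le> 0" if y: "y \<in> frontier G" and e: "e \<in> d y" for y e
    proof -
      have yc: "y \<in> closure G" using y fr by auto
      obtain t where t: "grad (\<lambda>y. - g y) y = (-t) *\<^sub>R v" "0 \<le> t" "t \<noteq> 0 \<longrightarrow> dist x y < r1"
        using GR[OF yc] by blast
      show ?thesis
      proof (cases "t = 0")
        case True then show ?thesis using t by simp
      next
        case False
        then have "dist x y \<le> r" using t r1r by auto
        then have "v \<bullet> e \<ge> 0" using KF[OF yc] e by auto
        then show ?thesis using t by (simp add: inner_commute)
      qed
    qed
    have tH: "testH G d V (\<lambda>y. - g y)"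
      unfolding testH_def using C2m vert bdry by blast
    have gnn: "\<forall>y\<in>closure G. g y \<ge> 0"
      unfolding g_def K_def f_def using ff_nonneg[OF abcd l] by auto
    have Cge: "C \<ge> 2 + B" using M by (simp add: C_def)
    have gle: "\<forall>y\<in>closure G. g y \<le> C * \<epsilon>"
    proof
      fix y
      have "g y \<le> \<epsilon> * T" unfolding g_def K_def f_def T_def using ff_le[OF abcd l] by (auto simp: d'_def)
      also have "\<dots> \<le> \<epsilon> * 2" using T2 \<epsilon> by (intro mult_left_mono) auto
      also have "\<dots> \<le> C * \<epsilon>" using Cge B \<epsilon> by (simp add: mult.commute mult_right_mono)
      finally show "g y \<le> C * \<epsilon>" .
    qed
    have sq0: "sqrt \<epsilon> \<ge> 0" using \<epsilon> by simp
    have C1: "1 \<le> C" using Cge B by simp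
    have gradb: "\<forall>y\<in>closure G. norm (grad g y) \<le> C * sqrt \<epsilon>"
    proof
      fix y assume y: "y \<in> closure G"
      obtain t where t: "grad g y = t *\<^sub>R v" "0 \<le> t" "t \<le> \<epsilon>" using GR[OF y] by blast
      have "norm (grad g y) = t" using t nv by simp
      also have "\<dots> \<le> sqrt \<epsilon>" using t sl by (simp add: l_def)
      also have "\<dots> \<le> C * sqrt \<epsilon>" using C1 sq0 mult_right_mono[of 1 C "sqrt \<epsilon>"] by simp
      finally show "norm (grad g y) \<le> C * sqrt \<epsilon>" .
    qed
    have bgrad: "\<forall>y\<in>closure G. \<bar>b y \<bullet> grad g y\<bar> \<le> C * sqrt \<epsilon>"
    proof
      fix y assume y: "y \<in> closure G"
      obtain t where t: "grad g y = t *\<^sub>R v" "0 \<le> t" "t \<le> \<epsilon>" "t \<noteq> 0 \<longrightarrow> dist x y < r1"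
        using GR[OF y] by blast
      show "\<bar>b y \<bullet> grad g y\<bar> \<le> C * sqrt \<epsilon>"
      proof (cases "t = 0")
        case True then show ?thesis using t Cpos sq0 by simp
      next
        case False
        then have "dist x y \<le> r" using t r1r by auto
        then have nb: "norm (b y) \<le> B" using B by simp
        have "\<bar>b y \<bullet> grad g y\<bar> = t * \<bar>b y \<bullet> v\<bar>" using t by (simp add: abs_mult)
        also have "\<dots> \<le> t * B"
          using Cauchy_Schwarz_ineq2[of "b y" v] nv nb t by (intro mult_left_mono) auto
        also have "\<dots> \<le> sqrt \<epsilon> * B" using t sl B by (intro mult_right_mono) (auto simp: l_def)
        also have "\<dots> \<le> C * sqrt \<epsilon>" using Cge sq0 B by (simp add: mult.commute mult_right_mono)
        finally show ?thesis .
      qed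
    qed
    have four: "\<forall>y\<in>closure G \<inter> cball x r.
             let h = v \<bullet> (y - x);
                 L = (\<Sum>i\<in>UNIV. \<Sum>j\<in>UNIV. diffm sg y $ i $ j * pd2 i j g y)
             in (\<delta> + 2 * sqrt \<delta> < h \<and> h < \<epsilon> / 2 \<longrightarrow> L \<ge> \<alpha>)
              \<and> (h \<ge> \<epsilon> \<longrightarrow> \<bar>L\<bar> \<le> C * sqrt \<epsilon>)
              \<and> (\<not> (\<delta> + 2 * sqrt \<delta> < h \<and> h < \<epsilon> / 2) \<and> \<not> (h \<ge> \<epsilon>) \<longrightarrow> L \<ge> 0)"
    proof
      fix y assume "y \<in> closure G \<inter> cball x r"
      then have yc: "y \<in> closure G" and yr: "dist x y \<le> r" by auto
      define A where "A = v \<bullet> (diffm sg y *v v)"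
      have A\<alpha>: "A \<ge> \<alpha>" using KF[OF yc] yr by (simp add: A_def)
      have AM: "\<bar>A\<bar> \<le> M" using M(2)[of y] yr by (simp add: A_def)
      define L where "L = (\<Sum>i\<in>UNIV. \<Sum>j\<in>UNIV. diffm sg y $ i $ j * pd2 i j g y)"
      have LW1: "y \<in> W1 \<Longrightarrow> L = p (hh y) * A"
        unfolding L_def A_def using LC(3) by (simp add: quad_sum hh_def)
      have LW2: "y \<notin> W1 \<Longrightarrow> L = 0 \<and> hh y > T"
      proof -
        assume n: "y \<notin> W1"
        then have "y \<in> W2" using clW yc by auto
        then show ?thesis unfolding L_def using LC(5) notW1[OF yc n] yr by simp
      qed
      have a: "L \<ge> \<alpha>" if h: "\<delta> + 2 * sqrt \<delta> < hh y" "hh y < \<epsilon> / 2"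
      proof -
        have "y \<in> W1"
        proof (rule ccontr)
          assume "y \<notin> W1"
          then have "hh y > T" using LW2 by blast
          then show False using h Te \<epsilon> by linarith
        qed
        moreover have "p (hh y) = 1" unfolding p_def
        proof (rule pp_mid[OF abcd l])
          have "sqrt \<delta> \<ge> 0" using \<delta> by simp
          then show "b' \<le> hh y" using h unfolding b'_def by linarith
          show "hh y \<le> c'" using h unfolding c'_def by linarith
        qed
        ultimately show ?thesis using LW1 A\<alpha> by simp
      qed
      have bb: "\<bar>L\<bar> \<le> C * sqrt \<epsilon>" if h: "hh y \<ge> \<epsilon>"
      proof (cases "y \<in> W1")
        case True
        have "\<bar>p (hh y)\<bar> \<le> l" unfolding p_def using h by (intro pp_high[OF abcd l]) (simp add: d'_def)
        then have "\<bar>L\<bar> \<le> l * M" using LW1[OF True] AM by (simp add: abs_mult mult_mono)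
        also have "\<dots> \<le> C * sqrt \<epsilon>"
        proof -
          have "M \<le> C" using B by (simp add: C_def)
          then show ?thesis using sq0 mult_right_mono[of M C "sqrt \<epsilon>"] by (simp add: l_def mult.commute)
        qed
        finally show ?thesis .
      next
        case False then show ?thesis using LW2 Cpos sq0 by simp
      qed
      have cc: "L \<ge> 0" if h: "\<not> hh y \<ge> \<epsilon>"
      proof -
        have "y \<in> W1"
        proof (rule ccontr)
          assume "y \<notin> W1"
          then have "hh y > T" using LW2 by blast
          then show False using h Te \<epsilon> by linarith
        qed
        moreover have "p (hh y) \<ge> 0" unfolding p_def
          using h pp_low[OF abcd l, of "hh y"] qq_nonneg[OF abcd] by (simp add: d'_def)
        ultimately show ?thesis using LW1 A\<alpha> \<alpha> by simp
      qed
      show "let h = v \<bullet> (y - x);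
                 L = (\<Sum>i\<in>UNIV. \<Sum>j\<in>UNIV. diffm sg y $ i $ j * pd2 i j g y)
             in (\<delta> + 2 * sqrt \<delta> < h \<and> h < \<epsilon> / 2 \<longrightarrow> L \<ge> \<alpha>)
              \<and> (h \<ge> \<epsilon> \<longrightarrow> \<bar>L\<bar> \<le> C * sqrt \<epsilon>)
              \<and> (\<not> (\<delta> + 2 * sqrt \<delta> < h \<and> h < \<epsilon> / 2) \<and> \<not> (h \<ge> \<epsilon>) \<longrightarrow> L \<ge> 0)"
        using a bb cc unfolding Let_def L_def[symmetric] hh_def by blast
    qed
    show "\<exists>g :: real^'j \<Rightarrow> real.
          C2c_plus_R G g \<and> testH G d V (\<lambda>y. - g y)
        \<and> (\<forall>y\<in>closure G. g y \<ge> 0)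
        \<and> (\<forall>y\<in>closure G. g y \<le> C * \<epsilon>)
        \<and> (\<forall>y\<in>closure G. norm (grad g y) \<le> C * sqrt \<epsilon>)
        \<and> (\<forall>y\<in>closure G. \<bar>b y \<bullet> grad g y\<bar> \<le> C * sqrt \<epsilon>)
        \<and> (\<forall>y\<in>closure G \<inter> cball x r.
             let h = v \<bullet> (y - x);
                 L = (\<Sum>i\<in>UNIV. \<Sum>j\<in>UNIV. diffm sg y $ i $ j * pd2 i j g y)
             in (\<delta> + 2 * sqrt \<delta> < h \<and> h < \<epsilon> / 2 \<longrightarrow> L \<ge> \<alpha>)
              \<and> (h \<ge> \<epsilon> \<longrightarrow> \<bar>L\<bar> \<le> C * sqrt \<epsilon>)
              \<and> (\<not> (\<delta> + 2 * sqrt \<delta> < h \<and> h < \<epsilon> / 2) \<and> \<not> (h \<ge> \<epsilon>) \<longrightarrow> L \<ge> 0))"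
      apply (rule exI[of _ g])
      using C2 tH gnn gle gradb bgrad four by (intro conjI)
  qed
qed
end
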